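(* Let $\Gamma\subseteq\mathbb R^n$ be an open convex set, $S\subseteq\Gamma$ a nonempty convex set, and $f:\Gamma\to\mathbb R$ a continuously differentiable function that is pseudoconvex on $\Gamma$. Let $\bar S=\arg\min\{f(x)\mid x\in S\}$ and $\bar x\in\bar S$. Define \[ \begin{aligned} T_1&:=\{x\in S\mid \nabla f(x)^T(\bar x-x)=0\},\\ T_2&:=\{x\in S\mid \nabla f(x)^T(\bar x-x)\ge0\},\\ T_3&:=\{x\in S\mid \nabla f(x)^T(\bar x-x)=\nabla f(\bar x)^T(x-\bar x)\},\\ T_4&:=\{x\in S\mid \nabla f(x)^T(\bar x-x)\ge\nabla f(\bar x)^T(x-\bar x)\},\\ T_5&:=\{x\in S\mid \nabla f(x)^T(\bar x-x)=\nabla f(\bar x)^T(x-\bar x)=0\}. \end{aligned} \] Then $\bar S=T_1=T_2=T_3=T_4=T_5$.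
   Context: A differentiable function $f$ on an open set $\Gamma$ is pseudoconvex on $\Gamma$ iff for all $x,y\in\Gamma$, $f(y)<f(x)$ implies $\nabla f(x)^T(y-x)<0$. *)

theory Defs
  imports "HOL-Analysis.Analysis"
begin

text \<open>The gradient of f is given as a function g with
  (f has_derivative (\<lambda>h. g x \<bullet> h)) (at x) for x in \<Gamma>.\<close>
definition pseudoconvex_on :: "'a::euclidean_space set \<Rightarrow> ('a \<Rightarrow> real) \<Rightarrow> ('a \<Rightarrow> 'a) \<Rightarrow> bool" where
  "pseudoconvex_on \<Gamma> f g \<longleftrightarrow>
     (\<forall>x\<in>\<Gamma>. \<forall>y\<in>\<Gamma>. f y < f x \<longrightarrow> g x \<bullet> (y - x) < 0)"

definition argmin_on :: "('a \<Rightarrow> real) \<Rightarrow> 'a set \<Rightarrow> 'a set" where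
  "argmin_on f S = {x \<in> S. \<forall>y\<in>S. f x \<le> f y}"

end

theory Submission
  imports Defs
begin

lemma dirderiv:
  fixes f :: "'a::euclidean_space \<Rightarrow> real"
  assumes "(f has_derivative (\<lambda>h. g \<bullet> h)) (at x)"
  shows "((\<lambda>t. f (x + t *\<^sub>R d)) has_real_derivative (g \<bullet> d)) (at 0)"
proof -
  have l: "((\<lambda>t::real. x + t *\<^sub>R d) has_derivative (\<lambda>t. t *\<^sub>R d)) (at 0)"
    by (auto intro!: derivative_eq_intros)
  have f0: "(f has_derivative (\<lambda>h. g \<bullet> h)) (at (x + 0 *\<^sub>R d))" using assms by simp
  have "((\<lambda>t. f (x + t *\<^sub>R d)) has_derivative (\<lambda>t. g \<bullet> (t *\<^sub>R d))) (at 0)"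
    using has_derivative_compose[OF l f0] by (simp add: o_def)
  moreover have "(\<lambda>t. g \<bullet> (t *\<^sub>R d)) = (*) (g \<bullet> d)" by (auto simp: mult.commute)
  ultimately show ?thesis by (simp add: has_field_derivative_def)
qed

theorem corollary3:
  fixes \<Gamma> S :: "'a::euclidean_space set"
    and f :: "'a \<Rightarrow> real" and g :: "'a \<Rightarrow> 'a" and xbar :: 'a
  assumes "open \<Gamma>" and "convex \<Gamma>"
    and "S \<subseteq> \<Gamma>" and "S \<noteq> {}" and "convex S"
    and grad: "\<And>x. x \<in> \<Gamma> \<Longrightarrow> (f has_derivative (\<lambda>h. g x \<bullet> h)) (at x)"
    and "continuous_on \<Gamma> g"
    and "pseudoconvex_on \<Gamma> f g"
    and "xbar \<in> argmin_on f S"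
  shows "argmin_on f S = {x \<in> S. g x \<bullet> (xbar - x) = 0}
       \<and> argmin_on f S = {x \<in> S. g x \<bullet> (xbar - x) \<ge> 0}
       \<and> argmin_on f S = {x \<in> S. g x \<bullet> (xbar - x) = g xbar \<bullet> (x - xbar)}
       \<and> argmin_on f S = {x \<in> S. g x \<bullet> (xbar - x) \<ge> g xbar \<bullet> (x - xbar)}
       \<and> argmin_on f S = {x \<in> S. g x \<bullet> (xbar - x) = g xbar \<bullet> (x - xbar)
                                 \<and> g xbar \<bullet> (x - xbar) = 0}"
proof -
  have pc: "\<And>x y. x \<in> \<Gamma> \<Longrightarrow> y \<in> \<Gamma> \<Longrightarrow> f y < f x \<Longrightarrow> g x \<bullet> (y - x) < 0"
    using assms(8) unfolding pseudoconvex_on_def by blast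
  have seg: "x + h *\<^sub>R (y - x) \<in> S" if "x \<in> S" "y \<in> S" "0 \<le> h" "h \<le> 1" for x y h
  proof -
    have "x + h *\<^sub>R (y - x) = (1 - h) *\<^sub>R x + h *\<^sub>R y" by (simp add: algebra_simps)
    thus ?thesis using convexD_alt[OF assms(5) that(1,2)] that(3,4) by simp
  qed
  have opt: "g x \<bullet> (y - x) \<ge> 0" if x: "x \<in> argmin_on f S" and y: "y \<in> S" for x y
  proof (rule ccontr)
    assume "\<not> ?thesis"
    hence neg: "g x \<bullet> (y - x) < 0" by simp
    have xS: "x \<in> S" using x unfolding argmin_on_def by auto
    have D: "((\<lambda>t. f (x + t *\<^sub>R (y - x))) has_real_derivative (g x \<bullet> (y - x))) (at 0)"
      using dirderiv grad xS assms(3) by blast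
    obtain d where d: "d > 0" "\<And>h. h > 0 \<Longrightarrow> h < d \<Longrightarrow> f (x + 0 *\<^sub>R (y - x)) > f (x + (0 + h) *\<^sub>R (y - x))"
      using DERIV_neg_dec_right[OF D neg] by blast
    define h where "h = min (d/2) 1"
    have h: "h > 0" "h < d" "h \<le> 1" using d(1) unfolding h_def by auto
    have "f x > f (x + h *\<^sub>R (y - x))" using d(2)[OF h(1,2)] by simp
    moreover have "x + h *\<^sub>R (y - x) \<in> S" using seg[OF xS y] h by simp
    ultimately show False using x unfolding argmin_on_def by (simp add: not_le[symmetric])
  qed
  have le: "g x \<bullet> (y - x) \<le> 0" if x: "x \<in> argmin_on f S" and y: "y \<in> argmin_on f S" for x y
  proof (rule ccontr)
    assume "\<not> ?thesis"
    hence pos: "g x \<bullet> (y - x) > 0" by simp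
    have xS: "x \<in> S" and yS: "y \<in> S" using x y unfolding argmin_on_def by auto
    have fxy: "f x = f y" using x y xS yS unfolding argmin_on_def by (simp add: order_antisym)
    have D: "((\<lambda>t. f (x + t *\<^sub>R (y - x))) has_real_derivative (g x \<bullet> (y - x))) (at 0)"
      using dirderiv grad xS assms(3) by blast
    obtain d where d: "d > 0" "\<And>h. h > 0 \<Longrightarrow> h < d \<Longrightarrow> f (x + 0 *\<^sub>R (y - x)) < f (x + (0 + h) *\<^sub>R (y - x))"
      using DERIV_pos_inc_right[OF D pos] by blast
    define h where "h = min (d/2) (1/2)"
    have h: "h > 0" "h < d" "h < 1" using d(1) unfolding h_def by auto
    define z where "z = x + h *\<^sub>R (y - x)"
    have fz: "f x < f z" using d(2)[OF h(1,2)] unfolding z_def by simp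
    have zS: "z \<in> S" using seg[OF xS yS] h unfolding z_def by simp
    have zG: "z \<in> \<Gamma>" and xG: "x \<in> \<Gamma>" and yG: "y \<in> \<Gamma>" using zS xS yS assms(3) by auto
    have a: "g z \<bullet> (x - z) < 0" using pc[OF zG xG fz] .
    have b: "g z \<bullet> (y - z) < 0" using pc[OF zG yG] fz fxy by simp
    have "x - z = (- h) *\<^sub>R (y - x)" unfolding z_def by (simp add: algebra_simps)
    hence a': "- h * (g z \<bullet> (y - x)) < 0" using a by (simp add: inner_scaleR_right)
    have "y - z = (1 - h) *\<^sub>R (y - x)" unfolding z_def by (simp add: algebra_simps)
    hence b': "(1 - h) * (g z \<bullet> (y - x)) < 0" using b by (simp add: inner_scaleR_right)
    from a' h(1) have "g z \<bullet> (y - x) > 0" by (simp add: zero_less_mult_iff)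
    with b' h(3) show False by (simp add: mult_less_0_iff)
  qed
  have bck: "x \<in> argmin_on f S" if hx: "x \<in> S" and hge: "g x \<bullet> (xbar - x) \<ge> 0" for x
  proof -
    have xb: "xbar \<in> S" "\<And>y. y \<in> S \<Longrightarrow> f xbar \<le> f y" using assms(9) unfolding argmin_on_def by auto
    have "\<not> f xbar < f x"
    proof
      assume "f xbar < f x"
      hence "g x \<bullet> (xbar - x) < 0" using pc[of x xbar] hx xb(1) assms(3) by blast
      thus False using hge by simp
    qed
    hence "f x \<le> f xbar" by simp
    hence "\<forall>y\<in>S. f x \<le> f y" using xb(2) by (meson order_trans)
    thus ?thesis using hx unfolding argmin_on_def by simp
  qed
  have inS: "\<And>x. x \<in> argmin_on f S \<Longrightarrow> x \<in> S" unfolding argmin_on_def by auto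
  have xbS: "xbar \<in> S" using inS assms(9) by blast
  have z1: "\<And>x. x \<in> argmin_on f S \<Longrightarrow> g x \<bullet> (xbar - x) = 0"
    using opt le assms(9) xbS by (meson order_antisym)
  have z2: "\<And>x. x \<in> argmin_on f S \<Longrightarrow> g xbar \<bullet> (x - xbar) = 0"
    using opt le assms(9) inS by (meson order_antisym)
  have ob: "\<And>x. x \<in> S \<Longrightarrow> g xbar \<bullet> (x - xbar) \<ge> 0" using opt assms(9) by blast
  have e1: "argmin_on f S = {x \<in> S. g x \<bullet> (xbar - x) = 0}"
  proof (intro set_eqI iffI)
    fix x assume "x \<in> argmin_on f S" thus "x \<in> {x \<in> S. g x \<bullet> (xbar - x) = 0}" using z1 inS by simp
  next
    fix x assume "x \<in> {x \<in> S. g x \<bullet> (xbar - x) = 0}" thus "x \<in> argmin_on f S" using bck by simp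
  qed
  have e2: "argmin_on f S = {x \<in> S. g x \<bullet> (xbar - x) \<ge> 0}"
  proof (intro set_eqI iffI)
    fix x assume "x \<in> argmin_on f S" thus "x \<in> {x \<in> S. g x \<bullet> (xbar - x) \<ge> 0}" using z1 inS by simp
  next
    fix x assume "x \<in> {x \<in> S. g x \<bullet> (xbar - x) \<ge> 0}" thus "x \<in> argmin_on f S" using bck by simp
  qed
  have e3: "argmin_on f S = {x \<in> S. g x \<bullet> (xbar - x) = g xbar \<bullet> (x - xbar)}"
  proof (intro set_eqI iffI)
    fix x assume "x \<in> argmin_on f S" thus "x \<in> {x \<in> S. g x \<bullet> (xbar - x) = g xbar \<bullet> (x - xbar)}"
      using z1 z2 inS by simp
  next
    fix x assume "x \<in> {x \<in> S. g x \<bullet> (xbar - x) = g xbar \<bullet> (x - xbar)}"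
    thus "x \<in> argmin_on f S" using ob bck by simp
  qed
  have e4: "argmin_on f S = {x \<in> S. g x \<bullet> (xbar - x) \<ge> g xbar \<bullet> (x - xbar)}"
  proof (intro set_eqI iffI)
    fix x assume "x \<in> argmin_on f S" thus "x \<in> {x \<in> S. g x \<bullet> (xbar - x) \<ge> g xbar \<bullet> (x - xbar)}"
      using z1 z2 inS by simp
  next
    fix x assume a: "x \<in> {x \<in> S. g x \<bullet> (xbar - x) \<ge> g xbar \<bullet> (x - xbar)}"
    hence "x \<in> S" "g x \<bullet> (xbar - x) \<ge> 0" using ob[of x] by auto
    thus "x \<in> argmin_on f S" using bck by simp
  qed
  have e5: "argmin_on f S = {x \<in> S. g x \<bullet> (xbar - x) = g xbar \<bullet> (x - xbar) \<and> g xbar \<bullet> (x - xbar) = 0}"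
    using e3 z2 by (intro set_eqI iffI) auto
  show ?thesis using e1 e2 e3 e4 e5 by blast
qed

end
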